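(* Let $(S,|\cdot|)$ be a finite metric space with $n$ points, $t\ge1$, $G'=(S,E')$ a $t$-spanner for $S$, $f$ an integer with $1\le f\le (n-1)/2$, and $G=(S,E)$ the graph obtained from $G'$ by the construction in the context. Let $F\subseteq E$ be such that $(S,F)$ has maximum degree at most $f$. Let $p,q$ be distinct points of $S$ and let $P'$ be a shortest path between $p$ and $q$ in $G'$. If $P'$ has at least $2f+2$ vertices, then $\delta_{G\setminus F}(p,q)\le (8f+2)\,|P'|$, where $|P'|$ is the length of $P'$.
   Context: All graphs on $S$ have edge weights $|pq|$; the length of a path is the sum of its edge weights and $\delta_X(p,q)$ is the shortest-path distance in $X$. A graph $G'=(S,E')$ is a $t$-spanner for $S$ if $\delta_{G'}(p,q)\le t|pq|$ for all $p,q$. $G\setminus F$ is the graph with vertex set $S$ and edge set $E\setminus F$. Construction: for each edge $\{a,b\}\in E'$, list the points of $S\setminus\{a,b\}$ as $c_1,\dots,c_{n-2}$ in non-decreasing order of $|ac_i|+|c_ib|$ (ties broken arbitrarily) and let $C_{ab}=\{c_1,\dots,c_{2f-1}\}$. The graph $G=(S,E)$ has edge set $E=E'\cup\{\{a,c\},\{c,b\}:\{a,b\}\in E',\ c\in C_{ab}\}$. *)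

theory Defs
  imports "HOL-Analysis.Analysis" "HOL-Library.Extended_Real"
begin

definition graph_edges :: "'a set \<Rightarrow> 'a set set \<Rightarrow> bool" where
  "graph_edges S E \<longleftrightarrow> (\<forall>e\<in>E. \<exists>a b. e = {a,b} \<and> a \<in> S \<and> b \<in> S \<and> a \<noteq> b)"

definition is_path :: "'a set \<Rightarrow> 'a set set \<Rightarrow> 'a list \<Rightarrow> 'a \<Rightarrow> 'a \<Rightarrow> bool" where
  "is_path S E P p q \<longleftrightarrow> P \<noteq> [] \<and> hd P = p \<and> last P = q \<and> distinct P \<and> set P \<subseteq> S \<and>
     (\<forall>i < length P - 1. {P ! i, P ! Suc i} \<in> E)"

definition path_len :: "('a::metric_space) list \<Rightarrow> real" where
  "path_len P = sum_list (map (\<lambda>(x,y). dist x y) (zip P (tl P)))"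

text \<open>Shortest-path distance (infinite if no path exists).\<close>
definition delta :: "('a::metric_space) set \<Rightarrow> 'a set set \<Rightarrow> 'a \<Rightarrow> 'a \<Rightarrow> ereal" where
  "delta S E p q = (INF P \<in> {P. is_path S E P p q}. ereal (path_len P))"

definition is_spanner :: "real \<Rightarrow> ('a::metric_space) set \<Rightarrow> 'a set set \<Rightarrow> bool" where
  "is_spanner t S E' \<longleftrightarrow> graph_edges S E' \<and>
     (\<forall>p\<in>S. \<forall>q\<in>S. delta S E' p q \<le> ereal (t * dist p q))"

text \<open>C is a valid choice of the sets C_ab: for each edge {a,b}, C {a,b} consists of the first
  2f-1 points of S - {a,b} in some non-decreasing order of |ac|+|cb| (ties broken arbitrarily).\<close>
definition valid_C :: "nat \<Rightarrow> ('a::metric_space) set \<Rightarrow> 'a set set \<Rightarrow> ('a set \<Rightarrow> 'a set) \<Rightarrow> bool" where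
  "valid_C f S E' C \<longleftrightarrow> (\<forall>a b. {a,b} \<in> E' \<longrightarrow>
      C {a,b} \<subseteq> S - {a,b} \<and> card (C {a,b}) = 2*f - 1 \<and>
      (\<forall>c\<in>C {a,b}. \<forall>d\<in>S - {a,b} - C {a,b}. dist a c + dist c b \<le> dist a d + dist d b))"

definition constr_edges :: "'a set set \<Rightarrow> ('a set \<Rightarrow> 'a set) \<Rightarrow> 'a set set" where
  "constr_edges E' C = E' \<union> {e. \<exists>a b c. {a,b} \<in> E' \<and> c \<in> C {a,b} \<and> (e = {a,c} \<or> e = {c,b})}"

definition max_degree_le :: "'a set \<Rightarrow> 'a set set \<Rightarrow> nat \<Rightarrow> bool" where
  "max_degree_le S F f \<longleftrightarrow> (\<forall>v\<in>S. card {e\<in>F. v \<in> e} \<le> f)"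

end

theory Submission
  imports Defs
begin

fun wok :: "'a set set \<Rightarrow> 'a list \<Rightarrow> bool" where
  "wok E (x#y#r) = ({x,y} \<in> E \<and> wok E (y#r))"
| "wok E _ = True"

lemma pl_nil[simp]: "path_len [] = 0" and pl_one[simp]: "path_len [x] = 0"
  and pl_cons2[simp]: "path_len (x#y#r) = dist x y + path_len (y#r)"
  by (simp_all add: path_len_def)

lemma pl_nonneg: "path_len W \<ge> 0"
  by (induction W rule: induct_list012) auto

lemma all_lt_Suc: "(\<forall>i<Suc n. P i) \<longleftrightarrow> P 0 \<and> (\<forall>i<n. P (Suc i))"
  by (auto simp: less_Suc_eq_0_disj)

lemma pl_append: "path_len (xs @ y # r) = path_len (xs @ [y]) + path_len (y # r)"
proof (induction xs)
  case Nil then show ?case by simp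
next
  case (Cons a xs) then show ?case by (cases xs) auto
qed

lemma wok_append: "wok E (xs @ y # r) \<longleftrightarrow> wok E (xs @ [y]) \<and> wok E (y # r)"
proof (induction xs)
  case Nil then show ?case by simp
next
  case (Cons a xs) then show ?case by (cases xs) auto
qed

lemma wok_idx: "wok E W \<longleftrightarrow> (\<forall>i < length W - 1. {W ! i, W ! Suc i} \<in> E)"
proof (induction E W rule: wok.induct)
  case (1 E x y r)
  then show ?case using all_lt_Suc[of "length r" "\<lambda>i. {(x # y # r) ! i, (x # y # r) ! Suc i} \<in> E"] by simp
qed auto

lemma pl_sum: "path_len P = (\<Sum>i<length P - 1. dist (P!i) (P!Suc i))"
proof (induction P rule: induct_list012)
  case (3 x y r)
  then show ?case by (simp add: sum.lessThan_Suc_shift del: sum.lessThan_Suc)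
qed auto

lemma shortcut:
  assumes "wok E W" "W \<noteq> []" "set W \<subseteq> S"
  shows "\<exists>P. is_path S E P (hd W) (last W) \<and> path_len P \<le> path_len W"
  using assms
proof (induction "length W" arbitrary: W rule: less_induct)
  case less
  show ?case
  proof (cases "distinct W")
    case True
    have "is_path S E W (hd W) (last W)"
      using True less.prems unfolding is_path_def wok_idx[symmetric] by simp
    then show ?thesis by blast
  next
    case False
    then obtain xs ys zs y where W: "W = xs @ [y] @ ys @ [y] @ zs"
      using not_distinct_decomp by blast
    define W' where "W' = xs @ y # zs"
    have len: "length W' < length W" using W W'_def by simp
    have wok1: "wok E (xs @ [y])" and wok2: "wok E (y # ys @ y # zs)"
      using less.prems(1) W wok_append[of E xs y "ys @ y # zs"] by auto
    have "wok E (y # zs)" using wok2 wok_append[of E "y#ys" y zs] by auto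
    hence wokW': "wok E W'" using wok1 W'_def wok_append[of E xs y zs] by simp
    have "path_len W = path_len (xs @ [y]) + path_len (y # ys @ y # zs)"
      using W pl_append[of xs y "ys @ y # zs"] by simp
    also have "path_len (y # ys @ y # zs) = path_len ((y # ys) @ [y]) + path_len (y # zs)"
      using pl_append[of "y#ys" y zs] by simp
    finally have "path_len W' \<le> path_len W"
      using W'_def pl_append[of xs y zs] pl_nonneg[of "(y # ys) @ [y]"] by simp
    moreover have "hd W' = hd W" using W W'_def
      by (cases xs) simp_all
    moreover have "last W' = last W" using W W'_def
      by (cases zs) simp_all
    moreover have "set W' \<subseteq> S" using less.prems W W'_def by auto
    moreover have "W' \<noteq> []" using W'_def by simp
    ultimately obtain P where "is_path S E P (hd W) (last W)" "path_len P \<le> path_len W'"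
      using less.hyps[OF len wokW'] by metis
    then show ?thesis using \<open>path_len W' \<le> path_len W\<close> by force
  qed
qed

lemma dist_chain:
  fixes x :: "nat \<Rightarrow> 'a::metric_space"
  shows "m \<le> n \<Longrightarrow> dist (x m) (x n) \<le> (\<Sum>e\<in>{m..<n}. dist (x e) (x (Suc e)))"
proof (induction n)
  case 0 then show ?case by simp
next
  case (Suc n)
  show ?case
  proof (cases "m = Suc n")
    case False
    hence "m \<le> n" using Suc by simp
    then show ?thesis using Suc.IH dist_triangle[of "x m" "x (Suc n)" "x n"]
      by (simp add: dist_commute)
  qed simp
qed


lemma bridge:
  assumes fin: "finite F" and ab: "{a,b} \<in> E'" and vC: "valid_C f S E' C"
    and md: "max_degree_le S F f" and aS: "a \<in> S" and bS: "b \<in> S" and f1: "1 \<le> f"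
  shows "{a,b} \<notin> F \<or> (\<exists>c\<in>C {a,b}. {a,c} \<notin> F \<and> {c,b} \<notin> F)"
proof (rule ccontr)
  assume H: "\<not> ?thesis"
  hence abF: "{a,b} \<in> F" by blast
  define K where "K = C {a,b}"
  have KS: "K \<subseteq> S - {a,b}" and cK: "card K = 2*f - 1"
    using vC ab unfolding valid_C_def K_def by blast+
  have finK: "finite K" using cK f1 card.infinite by fastforce
  define FA where "FA = {c\<in>K. {a,c} \<in> F}"
  define FB where "FB = {c\<in>K. {c,b} \<in> F}"
  have sa: "insert {a,b} ((\<lambda>c. {a,c}) ` FA) \<subseteq> {e\<in>F. a \<in> e}"
    unfolding FA_def using abF by auto
  have "card (insert {a,b} ((\<lambda>c. {a,c}) ` FA)) \<le> card {e\<in>F. a \<in> e}"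
    using sa fin by (intro card_mono) auto
  also have "\<dots> \<le> f" using md aS unfolding max_degree_le_def by blast
  finally have "card (insert {a,b} ((\<lambda>c. {a,c}) ` FA)) \<le> f" .
  moreover have "{a,b} \<notin> (\<lambda>c. {a,c}) ` FA"
    using KS FA_def by (auto simp: doubleton_eq_iff)
  moreover have "inj_on (\<lambda>c. {a,c}) FA"
    using KS FA_def by (auto simp: inj_on_def doubleton_eq_iff)
  moreover have "finite FA" using finK FA_def by simp
  ultimately have cA: "card FA + 1 \<le> f"
    by (simp add: card_image)
  have sb: "insert {a,b} ((\<lambda>c. {c,b}) ` FB) \<subseteq> {e\<in>F. b \<in> e}"
    unfolding FB_def using abF by auto
  have "card (insert {a,b} ((\<lambda>c. {c,b}) ` FB)) \<le> card {e\<in>F. b \<in> e}"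
    using sb fin by (intro card_mono) auto
  also have "\<dots> \<le> f" using md bS unfolding max_degree_le_def by blast
  finally have "card (insert {a,b} ((\<lambda>c. {c,b}) ` FB)) \<le> f" .
  moreover have "{a,b} \<notin> (\<lambda>c. {c,b}) ` FB"
    using KS FB_def by (auto simp: doubleton_eq_iff)
  moreover have "inj_on (\<lambda>c. {c,b}) FB"
    using KS FB_def by (auto simp: inj_on_def doubleton_eq_iff)
  moreover have "finite FB" using finK FB_def by simp
  ultimately have cB: "card FB + 1 \<le> f"
    by (simp add: card_image)
  have "K = FA \<union> FB" using H FA_def FB_def K_def by auto
  hence "card K \<le> card FA + card FB" by (simp add: card_Un_le)
  thus False using cA cB cK f1 by linarith
qed

lemma hd_app_cons: "hd (W0 @ a # r) = hd (W0 @ [a])"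
  by (cases W0) simp_all

theorem lemma5:
  fixes S :: "'a::metric_space set" and t :: real and E' F :: "'a set set"
    and f :: nat and C :: "'a set \<Rightarrow> 'a set" and p q :: 'a and P' :: "'a list"
  assumes "finite S"
    and "t \<ge> 1"
    and "is_spanner t S E'"
    and "1 \<le> f" and "2 * f \<le> card S - 1"
    and "valid_C f S E' C"
    and "F \<subseteq> constr_edges E' C"
    and "max_degree_le S F f"
    and "p \<in> S" and "q \<in> S" and "p \<noteq> q"
    and "is_path S E' P' p q" and "ereal (path_len P') = delta S E' p q"
    and "length P' \<ge> 2 * f + 2"
  shows "delta S (constr_edges E' C - F) p q \<le> ereal ((8 * real f + 2) * path_len P')"
proof -
  from assms(12) have Pne: "P' \<noteq> []" and hdP: "hd P' = p" and lastP: "last P' = q"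
    and dP: "distinct P'" and sP: "set P' \<subseteq> S"
    and eP: "\<forall>i < length P' - 1. {P'!i, P'!Suc i} \<in> E'"
    unfolding is_path_def by auto
  define k where "k = length P' - 1"
  define x where "x = (\<lambda>i. P' ! i)"
  define w where "w = (\<lambda>e. dist (x e) (x (Suc e)))"
  define E where "E = constr_edges E' C - F"
  have k2: "2*f+1 \<le> k" using assms(14) k_def by simp
  have lenP: "length P' = Suc k" using k_def Pne by simp
  have x0: "x 0 = p" using hdP Pne x_def hd_conv_nth by metis
  have xk: "x k = q" using lastP Pne x_def last_conv_nth k_def by metis
  have xS: "\<And>j. j \<le> k \<Longrightarrow> x j \<in> S"
    using sP lenP x_def nth_mem by (metis less_Suc_eq_le subsetD)
  have xinj: "\<And>i j. i \<le> k \<Longrightarrow> j \<le> k \<Longrightarrow> x i = x j \<Longrightarrow> i = j"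
    using dP lenP x_def nth_eq_iff_index_eq by (metis less_Suc_eq_le)
  have eE': "\<And>i. i < k \<Longrightarrow> {x i, x (Suc i)} \<in> E'" using eP k_def x_def by simp
  have PL: "path_len P' = (\<Sum>e<k. w e)" using pl_sum[of P'] k_def w_def x_def by simp
  have wnn: "\<And>e. w e \<ge> 0" by (simp add: w_def)
  have ge: "graph_edges S E'" using assms(3) is_spanner_def by blast
  have CS: "constr_edges E' C \<subseteq> Pow S"
  proof
    fix e assume "e \<in> constr_edges E' C"
    then show "e \<in> Pow S"
      unfolding constr_edges_def
    proof
      assume "e \<in> E'" thus ?thesis using ge unfolding graph_edges_def by auto
    next
      assume "e \<in> {e. \<exists>a b c. {a,b} \<in> E' \<and> c \<in> C {a,b} \<and> (e = {a,c} \<or> e = {c,b})}"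
      then obtain a b c where abE: "{a,b} \<in> E'" and cC: "c \<in> C {a,b}" and ee: "e = {a,c} \<or> e = {c,b}"
        by blast
      obtain a' b' where "{a,b} = {a',b'}" "a' \<in> S" "b' \<in> S"
        using ge abE unfolding graph_edges_def by blast
      hence abS: "{a,b} \<subseteq> S" by auto
      have "C {a,b} \<subseteq> S" using assms(6) abE unfolding valid_C_def by blast
      then show ?thesis using abS cC ee by auto
    qed
  qed
  have finF: "finite F" using assms(1) assms(7) CS by (meson finite_Pow_iff finite_subset)
  define Win where "Win = (\<lambda>i. {e. e < k \<and> i \<le> e + 2*f \<and> e \<le> i + 2*f})"
  define ws where "ws = (\<lambda>i. \<Sum>e\<in>Win i. w e)"
  have finWin: "\<And>i. finite (Win i)" unfolding Win_def by simp
  have sub_ws: "\<And>i A. A \<subseteq> Win i \<Longrightarrow> sum w A \<le> ws i"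
    unfolding ws_def using sum_mono2 wnn finWin by metis
  have step: "\<forall>i<k. \<exists>M. set M \<subseteq> S \<and> wok E (x i # M @ [x (Suc i)]) \<and>
       path_len (x i # M @ [x (Suc i)]) \<le> 2 * ws i"
  proof (intro allI impI)
    fix i assume ik: "i < k"
    define a where "a = x i"
    define b where "b = x (Suc i)"
    have abE: "{a,b} \<in> E'" using eE' ik a_def b_def by simp
    have aS: "a \<in> S" and bS: "b \<in> S" using xS ik a_def b_def by auto
    have wi: "w i \<le> ws i" using sub_ws[of "{i}" i] ik by (simp add: Win_def)
    have wsnn: "0 \<le> ws i" using wi wnn[of i] by linarith
    from bridge[OF finF abE assms(6) assms(8) aS bS assms(4)]
    show "\<exists>M. set M \<subseteq> S \<and> wok E (x i # M @ [x (Suc i)]) \<and>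
       path_len (x i # M @ [x (Suc i)]) \<le> 2 * ws i"
    proof
      assume nF: "{a,b} \<notin> F"
      have "{a,b} \<in> E" using abE nF unfolding E_def constr_edges_def by auto
      then show ?thesis using wi wsnn
        by (intro exI[of _ "[]"]) (simp add: w_def a_def b_def)
    next
      assume "\<exists>c\<in>C {a,b}. {a,c} \<notin> F \<and> {c,b} \<notin> F"
      then obtain c where cC: "c \<in> C {a,b}" and n1: "{a,c} \<notin> F" and n2: "{c,b} \<notin> F" by blast
      have e1: "{a,c} \<in> E" and e2: "{c,b} \<in> E"
        using abE cC n1 n2 unfolding E_def constr_edges_def by blast+
      have vc1: "C {a,b} \<subseteq> S - {a,b}" and vc2: "card (C {a,b}) = 2*f - 1"
        and vc3: "\<forall>c\<in>C {a,b}. \<forall>d\<in>S - {a,b} - C {a,b}. dist a c + dist c b \<le> dist a d + dist d b"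
        using assms(6)[unfolded valid_C_def, rule_format, OF abE] by blast+
      have cS: "c \<in> S" using vc1 cC by blast
      have finC: "finite (C {a,b})" using vc2 assms(4) card.infinite by fastforce
      define J where "J = {j. j \<le> k \<and> j \<noteq> i \<and> j \<noteq> Suc i \<and> i \<le> j + 2*f \<and> j \<le> i + 2*f + 1}"
      have finJ: "finite J" unfolding J_def by simp
      have cJ: "2*f \<le> card J"
      proof (cases "i + 2*f + 1 \<le> k")
        case True
        have "{Suc (Suc i)..i + 2*f + 1} \<subseteq> J" using True unfolding J_def by auto
        from card_mono[OF finJ this] show ?thesis by simp
      next
        case False
        have s1: "{i, Suc i} \<subseteq> {k - 2*f - 1..k}" using False ik by auto
        have "{k - 2*f - 1..k} - {i, Suc i} \<subseteq> J" using False ik k2 unfolding J_def by auto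
        from card_mono[OF finJ this] card_Diff_subset[OF _ s1] k2
        show ?thesis by simp
      qed
      have injJ: "inj_on x J" using xinj unfolding J_def inj_on_def by auto
      have xJS: "x ` J \<subseteq> S - {a,b}"
      proof
        fix y assume "y \<in> x ` J"
        then obtain j where jJ: "j \<in> J" and yj: "y = x j" by blast
        have "x j \<noteq> x i" using xinj[of j i] jJ ik unfolding J_def by auto
        moreover have "x j \<noteq> x (Suc i)" using xinj[of j "Suc i"] jJ ik unfolding J_def by auto
        ultimately show "y \<in> S - {a,b}" using xS jJ yj a_def b_def unfolding J_def by auto
      qed
      have "\<not> x ` J \<subseteq> C {a,b}"
      proof
        assume "x ` J \<subseteq> C {a,b}"
        from card_mono[OF finC this] card_image[OF injJ] cJ vc2 assms(4) show False by simp
      qed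
      then obtain j where jJ: "j \<in> J" and dC: "x j \<notin> C {a,b}" by blast
      have cd: "dist a c + dist c b \<le> dist a (x j) + dist (x j) b"
        using vc3 cC dC xJS jJ by blast
      have "dist a (x j) + dist (x j) b \<le> 2 * ws i"
      proof (cases "j < i")
        case True
        have d1: "dist (x j) (x i) \<le> sum w {j..<i}" using dist_chain[of j i x] True w_def by simp
        have d2: "dist (x j) (x (Suc i)) \<le> sum w {j..<Suc i}"
          using dist_chain[of j "Suc i" x] True w_def by simp
        have d3: "sum w {j..<i} \<le> sum w {j..<Suc i}" using True wnn[of i] by simp
        have "{j..<Suc i} \<subseteq> Win i" using jJ True ik unfolding J_def Win_def by auto
        from sub_ws[OF this] d1 d2 d3 show ?thesis
          unfolding a_def b_def by (simp add: dist_commute)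
      next
        case False
        hence ji: "Suc i < j" using jJ unfolding J_def by auto
        have d1: "dist (x i) (x j) \<le> sum w {i..<j}" using dist_chain[of i j x] ji w_def by simp
        have d2: "dist (x (Suc i)) (x j) \<le> sum w {Suc i..<j}"
          using dist_chain[of "Suc i" j x] ji w_def by simp
        have d3: "sum w {Suc i..<j} \<le> sum w {i..<j}"
          using sum_mono2[of "{i..<j}" "{Suc i..<j}" w] wnn by auto
        have "{i..<j} \<subseteq> Win i" using jJ ik unfolding J_def Win_def by auto
        from sub_ws[OF this] d1 d2 d3 show ?thesis
          unfolding a_def b_def by (simp add: dist_commute)
      qed
      with cd have "path_len [a, c, b] \<le> 2 * ws i" by simp
      then show ?thesis using e1 e2 cS
        by (intro exI[of _ "[c]"]) (simp add: a_def b_def)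
    qed
  qed
  have walk: "\<And>n. n \<le> k \<Longrightarrow> \<exists>W. W \<noteq> [] \<and> hd W = p \<and> last W = x n \<and> set W \<subseteq> S \<and> wok E W
      \<and> path_len W \<le> (\<Sum>i<n. 2 * ws i)"
  proof -
    fix n show "n \<le> k \<Longrightarrow> \<exists>W. W \<noteq> [] \<and> hd W = p \<and> last W = x n \<and> set W \<subseteq> S \<and> wok E W
      \<and> path_len W \<le> (\<Sum>i<n. 2 * ws i)"
    proof (induction n)
      case 0 show ?case using x0 assms(9) by (intro exI[of _ "[p]"]) simp
    next
      case (Suc n)
      then obtain W where W: "W \<noteq> []" "hd W = p" "last W = x n" "set W \<subseteq> S" "wok E W"
        "path_len W \<le> (\<Sum>i<n. 2 * ws i)" by auto
      from step Suc.prems obtain M where M: "set M \<subseteq> S" "wok E (x n # M @ [x (Suc n)])"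
        "path_len (x n # M @ [x (Suc n)]) \<le> 2 * ws n" using Suc_le_lessD by blast
      obtain W0 where Wd: "W = W0 @ [x n]" using W(1,3) by (metis append_butlast_last_id)
      define W' where "W' = W0 @ x n # M @ [x (Suc n)]"
      have "wok E W'" using wok_append[of E W0 "x n" "M @ [x (Suc n)]"] W(5) M(2)
        unfolding W'_def Wd by simp
      moreover have "path_len W' \<le> (\<Sum>i<Suc n. 2 * ws i)"
        using pl_append[of W0 "x n" "M @ [x (Suc n)]"] W(6) M(3)
        unfolding W'_def Wd by simp
      moreover have "hd W' = p" using W(2) hd_app_cons[of W0 "x n" "M @ [x (Suc n)]"]
        unfolding W'_def Wd by simp
      moreover have "set W' \<subseteq> S" using W(4) M(1) xS Suc.prems unfolding W'_def Wd by auto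
      moreover have "last W' = x (Suc n)" "W' \<noteq> []" unfolding W'_def by simp_all
      ultimately show ?case by blast
    qed
  qed
  from walk[of k] obtain W where W: "W \<noteq> []" "hd W = p" "last W = q" "set W \<subseteq> S" "wok E W"
      "path_len W \<le> (\<Sum>i<k. 2 * ws i)" using xk by auto
  from shortcut[OF W(5,1,4)] W(2,3) obtain P where P: "is_path S E P p q" "path_len P \<le> path_len W"
    by auto
  have dl: "delta S E p q \<le> ereal (path_len P)"
    unfolding delta_def by (rule INF_lower) (use P in simp)
  have swap: "(\<Sum>i<k. ws i) = (\<Sum>e<k. (\<Sum>i\<in>{i. i \<in> {..<k} \<and> i \<le> e + 2*f \<and> e \<le> i + 2*f}. w e))"
    unfolding ws_def Win_def
    using sum.swap_restrict[of "{..<k}" "{..<k}" "\<lambda>i e. w e" "\<lambda>i e. i \<le> e + 2*f \<and> e \<le> i + 2*f"]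
    by (simp add: lessThan_def)
  have cnt: "\<And>e. card {i. i \<in> {..<k} \<and> i \<le> e + 2*f \<and> e \<le> i + 2*f} \<le> 4*f+1"
  proof -
    fix e
    have "{i. i \<in> {..<k} \<and> i \<le> e + 2*f \<and> e \<le> i + 2*f} \<subseteq> {e - 2*f..e+2*f}" by auto
    from card_mono[OF _ this] show "card {i. i \<in> {..<k} \<and> i \<le> e + 2*f \<and> e \<le> i + 2*f} \<le> 4*f+1"
      by simp
  qed
  have "(\<Sum>i<k. ws i) \<le> (\<Sum>e<k. (4*real f+1) * w e)"
    unfolding swap
  proof (rule sum_mono)
    fix e assume "e \<in> {..<k}"
    define Ie where "Ie = {i. i \<in> {..<k} \<and> i \<le> e + 2*f \<and> e \<le> i + 2*f}"
    have "real (card Ie) \<le> real (4*f+1)"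
      using cnt[of e] unfolding Ie_def by (simp only: of_nat_le_iff)
    hence "real (card Ie) \<le> 4*real f+1" by simp
    from mult_right_mono[OF this wnn[of e]]
    have "(\<Sum>i\<in>Ie. w e) \<le> (4*real f+1) * w e"
      by (simp only: sum_constant)
    then show "(\<Sum>i\<in>{i. i \<in> {..<k} \<and> i \<le> e + 2*f \<and> e \<le> i + 2*f}. w e) \<le> (4*real f+1) * w e"
      unfolding Ie_def .
  qed
  moreover have "(\<Sum>i<k. 2 * ws i) = 2 * (\<Sum>i<k. ws i)" by (simp add: sum_distrib_left)
  moreover have "(\<Sum>e<k. (4*real f+1) * w e) = (4*real f+1) * path_len P'"
    unfolding PL by (simp add: sum_distrib_left)
  moreover have "(8 * real f + 2) * path_len P' = 2 * ((4*real f+1) * path_len P')"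
    by (simp add: algebra_simps)
  ultimately have "path_len P \<le> (8 * real f + 2) * path_len P'"
    using P(2) W(6) by linarith
  hence "ereal (path_len P) \<le> ereal ((8 * real f + 2) * path_len P')" by simp
  with dl show ?thesis unfolding E_def by (rule order_trans)
qed

end
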